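(* Every spiking neural network that is a randomized neural timer with time parameter $t\in\mathbb{N}_{>0}$ and error probability $\delta\in(0,1)$ must use $\Omega(\min\{\log\log(1/\delta),\log t\})$ neurons.
   Context: A spiking neural network (SNN) consists of input neurons (no incoming edges), output neurons and auxiliary neurons, connected by directed weighted edges with weights $w(u,v)\in\mathbb{R}$ (self-loops allowed); every neuron $v$ has a threshold $b(v)\ge 0$ and is either excitatory (all outgoing weights $\ge0$) or inhibitory (all outgoing weights $\le 0$). The network evolves in discrete synchronous rounds; $u^\tau\in\{0,1\}$ indicates whether $u$ fires in round $\tau$, input firings are given externally, and for a non-input neuron the potential is $\mathrm{pot}(u,\tau)=\sum_v w(v,u)\,v^{\tau-1}-b(u)$. A deterministic threshold gate fires iff $\mathrm{pot}(u,\tau)\ge0$; a spiking (probabilistic) neuron fires in round $\tau$ independently with probability $1/(1+e^{-\mathrm{pot}(u,\tau)})$; neurons may be of either kind. A randomized neural timer with parameters $t$ and $\delta$ has an input neuron $x$ and an output neuron $y$ and satisfies, within a time window of $\mathrm{poly}(t)$ rounds: (i) for every fixed firing event of $x$ in a round $\tau$, with probability at least $1-\delta$, $y$ fires in each of the following $t$ rounds; (ii) with probability at least $1-\delta$, $y^{\tau'}=0$ for every round $\tau'$ with $\tau'-\mathrm{Last}(\tau')\ge 2t$, where $\mathrm{Last}(\tau')=\max\{i\le\tau' : x^i=1\}$. *)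

theory Defs
  imports "HOL-Probability.Probability"
begin

text \<open>A spiking neural network with neurons labelled by natural numbers.
  inp = the input neuron x, outp = the output neuron y; all other neurons
  are non-input neurons. weight u v = w(u,v); thr v = b(v);
  excit v: v is excitatory (otherwise inhibitory);
  spiking v: v is a spiking (probabilistic) neuron (otherwise a
  deterministic threshold gate).\<close>

record snn =
  neurons :: "nat set"
  inp     :: nat
  outp    :: nat
  weight  :: "nat \<Rightarrow> nat \<Rightarrow> real"
  thr     :: "nat \<Rightarrow> real"
  excit   :: "nat \<Rightarrow> bool"
  spiking :: "nat \<Rightarrow> bool"

definition wf_snn :: "snn \<Rightarrow> bool" where
  "wf_snn N \<longleftrightarrow>
     finite (neurons N) \<and> inp N \<in> neurons N \<and> outp N \<in> neurons N \<and> inp N \<noteq> outp N \<and>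
     (\<forall>v\<in>neurons N. weight N v (inp N) = 0) \<and>
     (\<forall>v\<in>neurons N. thr N v \<ge> 0) \<and>
     (\<forall>u\<in>neurons N. \<forall>v\<in>neurons N.
        (excit N u \<longrightarrow> weight N u v \<ge> 0) \<and> (\<not> excit N u \<longrightarrow> weight N u v \<le> 0))"

definition pot :: "snn \<Rightarrow> (nat \<Rightarrow> bool) \<Rightarrow> nat \<Rightarrow> real" where
  "pot N s u = (\<Sum>v\<in>neurons N. weight N v u * (if s v then 1 else 0)) - thr N u"

definition sigmoid :: "real \<Rightarrow> real" where
  "sigmoid z = 1 / (1 + exp (- z))"

definition neuron_step :: "snn \<Rightarrow> bool \<Rightarrow> (nat \<Rightarrow> bool) \<Rightarrow> nat \<Rightarrow> bool pmf" where
  "neuron_step N b s u =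
     (if u = inp N then return_pmf b
      else if spiking N u then bernoulli_pmf (sigmoid (pot N s u))
      else return_pmf (pot N s u \<ge> 0))"

definition step :: "snn \<Rightarrow> bool \<Rightarrow> (nat \<Rightarrow> bool) \<Rightarrow> (nat \<Rightarrow> bool) pmf" where
  "step N b s = Pi_pmf (neurons N) False (neuron_step N b s)"

definition init_state :: "snn \<Rightarrow> bool \<Rightarrow> (nat \<Rightarrow> bool)" where
  "init_state N b = (\<lambda>u. u = inp N \<and> b)"

text \<open>An execution h maps round \<tau> to the firing
  state in round \<tau>; rounds > n are left at the initial state.\<close>
fun traj :: "snn \<Rightarrow> (nat \<Rightarrow> bool) \<Rightarrow> nat \<Rightarrow> (nat \<Rightarrow> nat \<Rightarrow> bool) pmf" where
  "traj N X 0 = return_pmf (\<lambda>_. init_state N (X 0))"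
| "traj N X (Suc n) =
     bind_pmf (traj N X n) (\<lambda>h. map_pmf (\<lambda>s. h(Suc n := s)) (step N (X (Suc n)) (h n)))"

text \<open>Randomized neural timer with parameters t, \<delta>, required to satisfy
  its guarantees within the time window of rounds 0..T.\<close>
definition is_timer :: "snn \<Rightarrow> nat \<Rightarrow> real \<Rightarrow> nat \<Rightarrow> bool" where
  "is_timer N t \<delta> T \<longleftrightarrow> wf_snn N \<and>
     (\<forall>X \<tau>. X \<tau> \<longrightarrow> \<tau> + t \<le> T \<longrightarrow>
        measure_pmf.prob (traj N X T) {h. \<forall>i\<in>{1..t}. h (\<tau> + i) (outp N)} \<ge> 1 - \<delta>) \<and>
     (\<forall>X. measure_pmf.prob (traj N X T)
        {h. \<forall>\<tau>'\<le>T. \<forall>l\<le>\<tau>'. X l \<and> (\<forall>i. l < i \<and> i \<le> \<tau>' \<longrightarrow> \<not> X i) \<and> 2 * t \<le> \<tau>' - l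
             \<longrightarrow> \<not> h \<tau>' (outp N)} \<ge> 1 - \<delta>)"

end

theory Submission
  imports Defs
begin


definition Sset :: "snn \<Rightarrow> (nat \<Rightarrow> bool) set" where
  "Sset N = {f. \<forall>x. f x \<longrightarrow> x \<in> neurons N}"

lemma Sset_eq: "Sset N = (\<lambda>A x. x \<in> A) ` Pow (neurons N)"
proof -
  have "f \<in> (\<lambda>A x. x \<in> A) ` Pow (neurons N)" if "\<forall>x. f x \<longrightarrow> x \<in> neurons N" for f
    by (rule image_eqI[of _ _ "{y. f y}"]) (use that in auto)
  then show ?thesis unfolding Sset_def by auto
qed

lemma card_Sset: "finite (neurons N) \<Longrightarrow> card (Sset N) = 2 ^ card (neurons N)"
  unfolding Sset_eq
  by (subst card_image) (auto simp: inj_on_def fun_eq_iff card_Pow)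

lemma finite_Sset: "finite (neurons N) \<Longrightarrow> finite (Sset N)"
  unfolding Sset_eq by simp

lemma step_support: "finite (neurons N) \<Longrightarrow> s \<in> set_pmf (step N b v) \<Longrightarrow> s \<in> Sset N"
  using set_Pi_pmf_subset[of "neurons N" False "neuron_step N b v"]
  unfolding step_def Sset_def by blast

lemma traj_support: "wf_snn N \<Longrightarrow> h \<in> set_pmf (traj N X T) \<Longrightarrow> h i \<in> Sset N"
proof (induction T arbitrary: h i)
  case 0
  then show ?case by (auto simp: Sset_def init_state_def wf_snn_def)
next
  case (Suc T)
  then obtain h' s where "h' \<in> set_pmf (traj N X T)" "s \<in> set_pmf (step N (X (Suc T)) (h' T))"
    "h = h'(Suc T := s)" by auto
  then show ?case using Suc step_support[of N s] by (auto simp: wf_snn_def)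
qed

lemma prob_bind_pmf:
  "measure_pmf.prob (bind_pmf M f) A = measure_pmf.expectation M (\<lambda>x. measure_pmf.prob (f x) A)"
proof -
  have "ennreal (measure_pmf.prob (bind_pmf M f) A) = emeasure (bind_pmf M f) A"
    by (simp add: measure_pmf.emeasure_eq_measure)
  also have "\<dots> = (\<integral>\<^sup>+x. emeasure (f x) A \<partial>M)" by simp
  also have "\<dots> = (\<integral>\<^sup>+x. ennreal (measure_pmf.prob (f x) A) \<partial>M)"
    by (simp add: measure_pmf.emeasure_eq_measure)
  also have "\<dots> = ennreal (measure_pmf.expectation M (\<lambda>x. measure_pmf.prob (f x) A))"
    by (rule nn_integral_eq_integral)
       (auto intro!: measure_pmf.integrable_const_bound[where B=1])
  finally show ?thesis
    by (subst (asm) ennreal_inj) (auto intro!: integral_nonneg_AE)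
qed

lemma expect_decomp:
  assumes fin: "finite S" and sup: "\<And>h. h \<in> set_pmf p \<Longrightarrow> f h \<in> S"
  shows "measure_pmf.expectation p (\<lambda>h. if A h then \<phi> (f h) else 0)
       = (\<Sum>v\<in>S. measure_pmf.prob p {h. A h \<and> f h = v} * (\<phi> v :: real))"
proof -
  have "measure_pmf.expectation p (\<lambda>h. if A h then \<phi> (f h) else 0)
      = measure_pmf.expectation p (\<lambda>h. \<Sum>v\<in>S. indicator {h. A h \<and> f h = v} h * \<phi> v)"
  proof (rule integral_cong_AE)
    show "AE h in measure_pmf p. (if A h then \<phi> (f h) else 0) = (\<Sum>v\<in>S. indicator {h. A h \<and> f h = v} h * \<phi> v)"
      unfolding AE_measure_pmf_iff
    proof (intro ballI)
      fix h assume "h \<in> set_pmf p"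
      then have "f h \<in> S" by (rule sup)
      then show "(if A h then \<phi> (f h) else 0) = (\<Sum>v\<in>S. indicator {h. A h \<and> f h = v} h * \<phi> v)"
        using fin by (auto simp: indicator_def if_distrib sum.delta cong: if_cong)
    qed
  qed auto
  also have "\<dots> = (\<Sum>v\<in>S. measure_pmf.expectation p (\<lambda>h. indicator {h. A h \<and> f h = v} h * \<phi> v))"
  proof (rule Bochner_Integration.integral_sum)
    fix v assume "v \<in> S"
    show "integrable (measure_pmf p) (\<lambda>h. indicator {h. A h \<and> f h = v} h * \<phi> v)"
      by (rule measure_pmf.integrable_const_bound[where B="\<bar>\<phi> v\<bar>"]) (auto simp: indicator_def)
  qed
  also have "\<dots> = (\<Sum>v\<in>S. measure_pmf.prob p {h. A h \<and> f h = v} * \<phi> v)"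
    by simp
  finally show ?thesis .
qed

fun G :: "snn \<Rightarrow> nat \<Rightarrow> (nat \<Rightarrow> bool) \<Rightarrow> (nat \<Rightarrow> bool) \<Rightarrow> real" where
  "G N 0 s u = (if s = u then 1 else 0)"
| "G N (Suc l) s u = (if u (outp N) then (\<Sum>w\<in>Sset N. G N l s w * pmf (step N False w) u) else 0)"

lemma traj_Suc_prob:
  "measure_pmf.prob (traj N X (Suc T)) A = measure_pmf.expectation (traj N X T)
     (\<lambda>h. measure_pmf.prob (step N (X (Suc T)) (h T)) {s. h(Suc T := s) \<in> A})"
  by (simp add: prob_bind_pmf vimage_def)

lemma traj_mono:
  assumes "\<And>h s. h(Suc T := s) \<in> A \<longleftrightarrow> h \<in> A"
  shows "measure_pmf.prob (traj N X (Suc T)) A = measure_pmf.prob (traj N X T) A"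
proof -
  have "(\<lambda>h. measure_pmf.prob (step N (X (Suc T)) (h T)) {s. h(Suc T := s) \<in> A}) = indicator A"
    by (auto simp: assms fun_eq_iff indicator_def)
  then show ?thesis unfolding traj_Suc_prob by simp
qed

lemma prob_single_cond:
  "measure_pmf.prob p {x. P x \<and> x = u} = (if P u then pmf p u else 0)"
proof -
  have "{x. P x \<and> x = u} = (if P u then {u} else {})" by auto
  then show ?thesis by (simp add: measure_pmf_single)
qed

lemma link:
  assumes wf: "wf_snn N"
  shows "a \<le> l \<Longrightarrow> l \<le> T \<Longrightarrow> measure_pmf.prob (traj N (\<lambda>i. i = 0) T)
     {h. (\<forall>j\<in>{1..l}. h j (outp N)) \<and> h a = s \<and> h l = u}
     = G N a (init_state N True) s * G N (l - a) s u"
proof (induction T arbitrary: l a s u)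
  case 0
  then show ?case by (simp add: indicator_def)
next
  case (Suc T)
  define s0 where "s0 = init_state N True"
  have fin: "finite (Sset N)" using wf by (simp add: wf_snn_def finite_Sset)
  have sup: "\<And>h. h \<in> set_pmf (traj N (\<lambda>i. i = 0) T) \<Longrightarrow> h T \<in> Sset N"
    using traj_support[OF wf] by blast
  show ?case
  proof (cases "l \<le> T")
    case True
    have "measure_pmf.prob (traj N (\<lambda>i. i = 0) (Suc T))
     {h. (\<forall>j\<in>{1..l}. h j (outp N)) \<and> h a = s \<and> h l = u} = measure_pmf.prob (traj N (\<lambda>i. i = 0) T)
     {h. (\<forall>j\<in>{1..l}. h j (outp N)) \<and> h a = s \<and> h l = u}"
      by (rule traj_mono) (use True Suc.prems in auto)
    then show ?thesis using Suc.IH[of a l s u] Suc.prems True by simp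
  next
    case False
    then have l: "l = Suc T" using Suc.prems by simp
    show ?thesis
    proof (cases "a \<le> T")
      case True
      have set: "{x. h(Suc T := x) \<in> {h. (\<forall>j\<in>{1..l}. h j (outp N)) \<and> h a = s \<and> h l = u}}
          = (if (\<forall>j\<in>{1..T}. h j (outp N)) \<and> h a = s then {x. x (outp N) \<and> x = u} else {})" for h
        using True by (auto simp: l atLeastAtMostSuc_conv)
      have "measure_pmf.prob (traj N (\<lambda>i. i = 0) (Suc T))
          {h. (\<forall>j\<in>{1..l}. h j (outp N)) \<and> h a = s \<and> h l = u}
        = measure_pmf.expectation (traj N (\<lambda>i. i = 0) T)
          (\<lambda>h. if (\<forall>j\<in>{1..T}. h j (outp N)) \<and> h a = s then
             measure_pmf.prob (step N False (h T)) {x. x (outp N) \<and> x = u} else 0)"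
        unfolding traj_Suc_prob set by (intro Bochner_Integration.integral_cong refl) simp
      also have "\<dots> = (\<Sum>v\<in>Sset N. measure_pmf.prob (traj N (\<lambda>i. i = 0) T)
          {h. ((\<forall>j\<in>{1..T}. h j (outp N)) \<and> h a = s) \<and> h T = v} *
           measure_pmf.prob (step N False v) {x. x (outp N) \<and> x = u})"
        by (rule expect_decomp[OF fin sup])
      also have "\<dots> = (\<Sum>v\<in>Sset N. G N a s0 s * G N (T - a) s v *
           (if u (outp N) then pmf (step N False v) u else 0))"
        using Suc.IH[of a T s] True by (simp only: prob_single_cond) (simp add: conj_assoc s0_def)
      also have "\<dots> = G N a s0 s * G N (l - a) s u"
        using True by (simp add: l Suc_diff_le sum_distrib_left mult.assoc)
      finally show ?thesis by (simp add: s0_def)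
    next
      case False
      then have a: "a = Suc T" using Suc.prems l by simp
      have set: "{x. h(Suc T := x) \<in> {h. (\<forall>j\<in>{1..l}. h j (outp N)) \<and> h a = s \<and> h l = u}}
          = (if (\<forall>j\<in>{1..T}. h j (outp N)) then {x. (x (outp N) \<and> s = u) \<and> x = s} else {})" for h
        by (auto simp: l a atLeastAtMostSuc_conv)
      have "measure_pmf.prob (traj N (\<lambda>i. i = 0) (Suc T))
          {h. (\<forall>j\<in>{1..l}. h j (outp N)) \<and> h a = s \<and> h l = u}
        = measure_pmf.expectation (traj N (\<lambda>i. i = 0) T)
          (\<lambda>h. if (\<forall>j\<in>{1..T}. h j (outp N)) then
             measure_pmf.prob (step N False (h T)) {x. (x (outp N) \<and> s = u) \<and> x = s} else 0)"
        unfolding traj_Suc_prob set by (intro Bochner_Integration.integral_cong refl) simp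
      also have "\<dots> = (\<Sum>v\<in>Sset N. measure_pmf.prob (traj N (\<lambda>i. i = 0) T)
          {h. (\<forall>j\<in>{1..T}. h j (outp N)) \<and> h T = v} *
           measure_pmf.prob (step N False v) {x. (x (outp N) \<and> s = u) \<and> x = s})"
        by (rule expect_decomp[OF fin sup])
      also have "\<dots> = (\<Sum>v\<in>Sset N. G N T s0 v *
           (if s (outp N) \<and> s = u then pmf (step N False v) s else 0))"
        using Suc.IH[of T T v v for v] by (simp only: prob_single_cond) (simp add: s0_def)
      also have "\<dots> = G N a s0 s * G N (l - a) s u"
        by (simp add: l a sum_distrib_left mult.assoc)
      finally show ?thesis by (simp add: s0_def)
    qed
  qed
qed

lemma G_nonneg: "G N l s u \<ge> 0"
  by (induction l arbitrary: u) (auto intro!: sum_nonneg)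

lemma sum_pmf_le1: "finite A \<Longrightarrow> (\<Sum>u\<in>A. pmf p u) \<le> 1"
  by (metis measure_measure_pmf_finite measure_pmf.prob_le_1)

lemma r_Suc:
  assumes fin: "finite (Sset N)"
  shows "(\<Sum>u\<in>Sset N. G N (Suc l) s u) \<le> (\<Sum>u\<in>Sset N. G N l s u)"
proof -
  have "(\<Sum>u\<in>Sset N. G N (Suc l) s u) \<le> (\<Sum>u\<in>Sset N. \<Sum>w\<in>Sset N. G N l s w * pmf (step N False w) u)"
    by (intro sum_mono) (auto intro!: sum_nonneg mult_nonneg_nonneg G_nonneg)
  also have "\<dots> = (\<Sum>w\<in>Sset N. G N l s w * (\<Sum>u\<in>Sset N. pmf (step N False w) u))"
    by (subst sum.swap) (simp add: sum_distrib_left)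
  also have "\<dots> \<le> (\<Sum>w\<in>Sset N. G N l s w * 1)"
    by (intro sum_mono mult_left_mono G_nonneg sum_pmf_le1 fin)
  finally show ?thesis by simp
qed

lemma r_mono:
  assumes fin: "finite (Sset N)" and "l \<le> l'"
  shows "(\<Sum>u\<in>Sset N. G N l' s u) \<le> (\<Sum>u\<in>Sset N. G N l s u)"
  using assms(2)
proof (induction l' rule: dec_induct)
  case (step k)
  then show ?case using r_Suc[OF fin, of k s] by linarith
qed simp

lemma G_le1:
  assumes fin: "finite (Sset N)" and s: "s \<in> Sset N" and u: "u \<in> Sset N"
  shows "G N l s u \<le> 1"
proof -
  have "G N l s u \<le> (\<Sum>u\<in>Sset N. G N l s u)"
    by (rule member_le_sum) (use u fin G_nonneg in auto)
  also have "\<dots> \<le> (\<Sum>u\<in>Sset N. G N 0 s u)" by (rule r_mono[OF fin]) simp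
  also have "\<dots> = 1" using s fin by simp
  finally show ?thesis .
qed

lemma G_pump:
  assumes v: "v \<in> Sset N"
  shows "G N a s v * G N b v u \<le> G N (a + b) s u"
proof (induction b arbitrary: u)
  case 0
  then show ?case by (simp add: G_nonneg)
next
  case (Suc b)
  have "G N a s v * G N (Suc b) v u
      = (if u (outp N) then (\<Sum>w\<in>Sset N. G N a s v * G N b v w * pmf (step N False w) u) else 0)"
    by (simp add: sum_distrib_left mult.assoc)
  also have "\<dots> \<le> (if u (outp N) then (\<Sum>w\<in>Sset N. G N (a + b) s w * pmf (step N False w) u) else 0)"
    using Suc.IH by (auto intro!: sum_mono mult_right_mono)
  also have "\<dots> = G N (a + Suc b) s u" by simp
  finally show ?case .
qed

lemma G_pow:
  assumes s: "s \<in> Sset N"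
  shows "G N a s0 s * G N d s s ^ k \<le> G N (a + k * d) s0 s"
proof (induction k)
  case 0
  then show ?case by simp
next
  case (Suc k)
  have "G N a s0 s * G N d s s ^ Suc k = (G N a s0 s * G N d s s ^ k) * G N d s s" by simp
  also have "\<dots> \<le> G N (a + k * d) s0 s * G N d s s"
    by (rule mult_right_mono[OF Suc.IH G_nonneg])
  also have "\<dots> \<le> G N (a + k * d + d) s0 s" by (rule G_pump[OF s])
  also have "a + k * d + d = a + Suc k * d" by simp
  finally show ?case .
qed

lemma prob_all:
  assumes wf: "wf_snn N" and "l \<le> T"
  shows "measure_pmf.prob (traj N (\<lambda>i. i = 0) T) {h. \<forall>j\<in>{1..l}. h j (outp N)}
     = (\<Sum>u\<in>Sset N. G N l (init_state N True) u)"
proof -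
  have fin: "finite (Sset N)" using wf by (simp add: wf_snn_def finite_Sset)
  have sup: "\<And>h. h \<in> set_pmf (traj N (\<lambda>i. i = 0) T) \<Longrightarrow> h l \<in> Sset N"
    using traj_support[OF wf] by blast
  have "(\<lambda>h. if (\<forall>j\<in>{1..l}. h j (outp N)) then (\<lambda>_. 1::real) (h l) else 0)
      = indicator {h. \<forall>j\<in>{1..l}. h j (outp N)}"
    by (auto simp: fun_eq_iff indicator_def)
  then have "measure_pmf.prob (traj N (\<lambda>i. i = 0) T) {h. \<forall>j\<in>{1..l}. h j (outp N)}
     = measure_pmf.expectation (traj N (\<lambda>i. i = 0) T)
         (\<lambda>h. if (\<forall>j\<in>{1..l}. h j (outp N)) then (\<lambda>_. 1::real) (h l) else 0)"
    by simp
  also have "\<dots> = (\<Sum>v\<in>Sset N. measure_pmf.prob (traj N (\<lambda>i. i = 0) T)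
        {h. (\<forall>j\<in>{1..l}. h j (outp N)) \<and> h l = v} * 1)"
    by (rule expect_decomp[OF fin sup])
  also have "\<dots> = (\<Sum>v\<in>Sset N. G N l (init_state N True) v)"
    using link[OF wf, of l l T v v for v] assms(2) by simp
  finally show ?thesis .
qed

lemma pigeon:
  assumes wf: "wf_snn N" and Mg: "card (Sset N) * g \<le> l" and lT: "l \<le> T"
  defines "I \<equiv> {p \<in> {0..card (Sset N)} \<times> {0..card (Sset N)} \<times> Sset N. fst p < fst (snd p)}"
  shows "measure_pmf.prob (traj N (\<lambda>i. i = 0) T) {h. \<forall>j\<in>{1..l}. h j (outp N)}
     \<le> (\<Sum>(i,i',s)\<in>I. G N (i*g) (init_state N True) s * G N ((i'-i)*g) s s)"
proof -
  let ?M = "card (Sset N)"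
  let ?p = "traj N (\<lambda>i. i = 0) T"
  let ?E = "\<lambda>(i,i',s). {h. (\<forall>j\<in>{1..i'*g}. h j (outp N)) \<and> h (i*g) = s \<and> h (i'*g) = s}"
  have fin: "finite (Sset N)" using wf by (simp add: wf_snn_def finite_Sset)
  have finI: "finite I" unfolding I_def using fin by (auto intro: finite_subset[of _ "{0..?M} \<times> {0..?M} \<times> Sset N"])
  have incl: "{h. \<forall>j\<in>{1..l}. h j (outp N)} \<inter> set_pmf ?p \<subseteq> (\<Union>q\<in>I. ?E q)"
  proof
    fix h assume h: "h \<in> {h. \<forall>j\<in>{1..l}. h j (outp N)} \<inter> set_pmf ?p"
    let ?f = "\<lambda>i. h (i * g)"
    have "?f ` {0..?M} \<subseteq> Sset N" using traj_support[OF wf] h by blast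
    then have "card (?f ` {0..?M}) \<le> ?M" by (rule card_mono[OF fin])
    then have "card {0..?M} > card (?f ` {0..?M})" by simp
    then have "\<not> inj_on ?f {0..?M}" by (rule pigeonhole)
    then obtain i i' where ii: "i \<in> {0..?M}" "i' \<in> {0..?M}" "i \<noteq> i'" "?f i = ?f i'"
      unfolding inj_on_def by blast
    have "\<exists>a b. a < b \<and> b \<le> ?M \<and> ?f a = ?f b"
    proof (cases "i < i'")
      case True then show ?thesis using ii by auto
    next
      case False then show ?thesis using ii by (intro exI[of _ i'] exI[of _ i]) auto
    qed
    then obtain a b where ab: "a < b" "b \<le> ?M" "?f a = ?f b" by blast
    have "b * g \<le> l" using ab(2) Mg by (meson le_trans mult_le_mono1)
    then have "h \<in> ?E (a, b, h (a*g))" using h ab by auto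
    moreover have "(a, b, h (a*g)) \<in> I"
      unfolding I_def using ab traj_support[OF wf] h by auto
    ultimately show "h \<in> (\<Union>q\<in>I. ?E q)" by blast
  qed
  have "measure_pmf.prob ?p {h. \<forall>j\<in>{1..l}. h j (outp N)}
     = measure_pmf.prob ?p ({h. \<forall>j\<in>{1..l}. h j (outp N)} \<inter> set_pmf ?p)"
    by (simp only: measure_Int_set_pmf)
  also have "\<dots> \<le> measure_pmf.prob ?p (\<Union>q\<in>I. ?E q)"
    by (rule measure_pmf.finite_measure_mono[OF incl]) simp
  also have "\<dots> \<le> (\<Sum>q\<in>I. measure_pmf.prob ?p (?E q))"
    by (rule measure_pmf.finite_measure_subadditive_finite[OF finI]) auto
  also have "\<dots> = (\<Sum>(i,i',s)\<in>I. G N (i*g) (init_state N True) s * G N ((i'-i)*g) s s)"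
  proof (rule sum.cong[OF refl])
    fix q assume "q \<in> I"
    then obtain i i' s where q: "q = (i, i', s)" "i < i'" "i' \<le> ?M" unfolding I_def by auto
    have "i' * g \<le> T" using q Mg lT by (meson le_trans mult_le_mono1)
    moreover have "i * g \<le> i' * g" using q by simp
    ultimately show "measure_pmf.prob ?p (?E q) = (case q of (i,i',s) \<Rightarrow> G N (i*g) (init_state N True) s * G N ((i'-i)*g) s s)"
      using link[OF wf, of "i*g" "i'*g" T s s] q by (simp add: diff_mult_distrib)
  qed
  finally show ?thesis .
qed



lemma pow64: "(2::nat) ^ (2 * n + 6) = 64 * (2^n * 2^n)"
proof -
  have "(2::nat) ^ (2 * n + 6) = 2 ^ (n + n) * 2 ^ 6" by (simp only: power_add mult_2)
  also have "\<dots> = 64 * (2^n * 2^n)" by (simp only: power_add) simp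
  finally show ?thesis .
qed

lemma nat_bound: "(4 * 2^n + 1) * (3 * n + 4) \<le> (2::nat) ^ (2 * n + 6)"
proof -
  have a: "n < 2^n" by (rule less_exp)
  have b: "4 * 2^n + 1 \<le> 5 * (2::nat)^n" using one_le_power[of "2::nat" n] by linarith
  have c: "3 * n + 4 \<le> 7 * (2::nat)^n" using a one_le_power[of "2::nat" n] by linarith
  have "(4 * 2^n + 1) * (3 * n + 4) \<le> (5 * (2::nat)^n) * (7 * 2^n)"
    by (rule mult_le_mono[OF b c])
  also have "\<dots> = 35 * (2^n * 2^n)" by simp
  also have "\<dots> \<le> 64 * (2^n * 2^n)" by (rule mult_le_mono1) simp
  also have "\<dots> = (2::nat) ^ (2 * n + 6)" by (rule pow64[symmetric])
  finally show ?thesis .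
qed

lemma cube_bound: "2 * (2^n + 1) ^ 3 \<le> (2::nat) ^ (3 * n + 4)"
proof -
  have "2^n + 1 \<le> (2::nat) ^ Suc n" using one_le_power[of "2::nat" n] by simp
  then have "(2^n + 1) ^ 3 \<le> ((2::nat) ^ Suc n) ^ 3" by (rule power_mono) simp
  also have "\<dots> = 2 ^ (3 * n + 3)" by (simp only: power_mult[symmetric]) (simp add: algebra_simps)
  finally have "2 * (2^n + 1) ^ 3 \<le> 2 * (2::nat) ^ (3 * n + 3)" by (rule mult_le_mono2)
  also have "2 * (2::nat) ^ (3 * n + 3) = 2 ^ Suc (3 * n + 3)" by (simp only: power_Suc)
  also have "Suc (3 * n + 3) = 3 * n + 4" by simp
  finally show ?thesis .
qed

lemma main_bound:
  fixes t :: nat and \<delta> :: real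
  assumes t: "0 < t" and d0: "0 < \<delta>" and d1: "\<delta> < 1" and tim: "is_timer N t \<delta> T"
    and T2: "2 * t \<le> T"
  shows "min (ln (ln (1 / \<delta>))) (ln (real t)) \<le> 5 * real (card (neurons N))"
proof -
  have wf: "wf_snn N" using tim by (simp add: is_timer_def)
  define n where "n = card (neurons N)"
  define M where "M = card (Sset N)"
  define s0 where "s0 = init_state N True"
  let ?y = "outp N"
  let ?X = "\<lambda>i::nat. i = 0"
  have finN: "finite (neurons N)" using wf by (simp add: wf_snn_def)
  have fin: "finite (Sset N)" using finN by (rule finite_Sset)
  have Mn: "M = 2 ^ n" unfolding M_def n_def using finN by (rule card_Sset)
  have "{inp N, outp N} \<subseteq> neurons N" using wf by (simp add: wf_snn_def)
  then have "card {inp N, outp N} \<le> n" unfolding n_def by (rule card_mono[OF finN])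
  moreover have "card {inp N, outp N} = 2" using wf by (simp add: wf_snn_def)
  ultimately have n2: "2 \<le> n" by simp
  have s0S: "s0 \<in> Sset N" using wf by (auto simp: Sset_def s0_def init_state_def wf_snn_def)
  have c1: "\<forall>X \<tau>. X \<tau> \<longrightarrow> \<tau> + t \<le> T \<longrightarrow>
        measure_pmf.prob (traj N X T) {h. \<forall>i\<in>{1..t}. h (\<tau> + i) (outp N)} \<ge> 1 - \<delta>"
    using tim unfolding is_timer_def by blast
  have "1 - \<delta> \<le> measure_pmf.prob (traj N ?X T) {h. \<forall>i\<in>{1..t}. h (0 + i) ?y}"
    using spec[OF spec[OF c1, of ?X], of 0] T2 by simp
  then have P1: "1 - \<delta> \<le> (\<Sum>u\<in>Sset N. G N t s0 u)"
    using prob_all[OF wf, of t T] T2 by (simp add: s0_def)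
  define B where "B = {h. \<forall>\<tau>'\<le>T. \<forall>l\<le>\<tau>'. ?X l \<and> (\<forall>i. l < i \<and> i \<le> \<tau>' \<longrightarrow> \<not> ?X i) \<and> 2 * t \<le> \<tau>' - l
             \<longrightarrow> \<not> h \<tau>' ?y}"
  have c2: "\<forall>X. measure_pmf.prob (traj N X T)
        {h. \<forall>\<tau>'\<le>T. \<forall>l\<le>\<tau>'. X l \<and> (\<forall>i. l < i \<and> i \<le> \<tau>' \<longrightarrow> \<not> X i) \<and> 2 * t \<le> \<tau>' - l
             \<longrightarrow> \<not> h \<tau>' (outp N)} \<ge> 1 - \<delta>"
    using tim unfolding is_timer_def by (elim conjE)
  have PB: "1 - \<delta> \<le> measure_pmf.prob (traj N ?X T) B"
    unfolding B_def by (rule spec[OF c2])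
  define A where "A = {h. \<forall>j\<in>{1..2*t}. h j ?y}"
  have "A \<inter> B = {}"
  proof (rule ccontr)
    assume "A \<inter> B \<noteq> {}"
    then obtain h where hA: "h \<in> A" and hB: "h \<in> B" by blast
    have "h (2*t) ?y" using hA t unfolding A_def by auto
    moreover have "\<not> h (2*t) ?y"
    proof -
      have "\<forall>\<tau>'\<le>T. \<forall>l\<le>\<tau>'. ?X l \<and> (\<forall>i. l < i \<and> i \<le> \<tau>' \<longrightarrow> \<not> ?X i) \<and> 2 * t \<le> \<tau>' - l
             \<longrightarrow> \<not> h \<tau>' ?y" using hB unfolding B_def by simp
      then have "?X 0 \<and> (\<forall>i. 0 < i \<and> i \<le> 2*t \<longrightarrow> \<not> ?X i) \<and> 2 * t \<le> 2*t - 0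
             \<longrightarrow> \<not> h (2*t) ?y" using T2 by blast
      then show ?thesis by simp
    qed
    ultimately show False by simp
  qed
  then have "measure_pmf.prob (traj N ?X T) A + measure_pmf.prob (traj N ?X T) B
      = measure_pmf.prob (traj N ?X T) (A \<union> B)"
    by (simp add: measure_pmf.finite_measure_Union)
  also have "\<dots> \<le> 1" by simp
  finally have "measure_pmf.prob (traj N ?X T) A \<le> \<delta>" using PB by simp
  then have P2: "(\<Sum>u\<in>Sset N. G N (2*t) s0 u) \<le> \<delta>"
    using prob_all[OF wf, of "2*t" T] T2 by (simp add: s0_def A_def)
  have lnpos: "0 < ln (1 / \<delta>)" using d0 d1 by simp
  show ?thesis
  proof (cases "1/2 \<le> \<delta>")
    case True
    have "1 / \<delta> \<le> 2" using True d0 by (simp add: field_simps)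
    then have "ln (1 / \<delta>) \<le> ln 2" using d0 by (subst ln_le_cancel_iff) auto
    then have "ln (1/\<delta>) < 1" using ln_2_less_1 by linarith
    then have "ln (ln (1/\<delta>)) < 0" using lnpos by simp
    then show ?thesis by (simp add: min_le_iff_disj n_def[symmetric])
  next
    case dsmall: False
    show ?thesis
    proof (cases "t < M")
      case True
      have "real t < 2 ^ n" using True Mn by (metis of_nat_less_iff of_nat_numeral of_nat_power)
      then have "ln (real t) < ln (2 ^ n)" using t by (subst ln_less_cancel_iff) auto
      also have "\<dots> = real n * ln 2" by (rule ln_realpow)
      also have "\<dots> \<le> real n * 1" using ln_2_less_1 by (intro mult_left_mono) auto
      finally show ?thesis by (simp add: min_le_iff_disj n_def[symmetric])
    next
      case False
      then have tM: "M \<le> t" by simp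
      define g where "g = t div M"
      have M1: "1 \<le> M" using Mn by simp
      have "M div M \<le> t div M" by (rule div_le_mono[OF tM])
      then have g1: "1 \<le> g" unfolding g_def using M1 by simp
      have tdm: "t = M * g + t mod M" unfolding g_def by simp
      then have Mg: "M * g \<le> t" by linarith
      note tdm
      moreover have "t mod M < M" using M1 by simp
      ultimately have "t < M * g + M" by linarith
      also have "\<dots> \<le> 2 * (M * g)" using g1 by simp
      finally have t2: "2 * t \<le> 4 * M * g" by simp
      define I where "I = {p \<in> {0..M} \<times> {0..M} \<times> Sset N. fst p < fst (snd p)}"
      define F where "F = (\<lambda>(i,i',s). G N (i*g) s0 s * G N ((i'-i)*g) s s)"
      have "1 - \<delta> \<le> measure_pmf.prob (traj N ?X T) {h. \<forall>j\<in>{1..t}. h j ?y}"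
        using P1 prob_all[OF wf, of t T] T2 by (simp add: s0_def)
      also have "\<dots> \<le> (\<Sum>q\<in>I. F q)"
        using pigeon[OF wf, of g t T] Mg T2 unfolding I_def F_def M_def s0_def by simp
      finally have sumF: "1 - \<delta> \<le> (\<Sum>q\<in>I. F q)" .
      define \<eta> where "\<eta> = 1 / (2 * (real M + 1) ^ 3)"
      have eta_pos: "0 < \<eta>" unfolding \<eta>_def by simp
      have finI: "finite I" unfolding I_def using fin
        by (auto intro: finite_subset[of _ "{0..M} \<times> {0..M} \<times> Sset N"])
      have "card I \<le> card ({0..M} \<times> {0..M} \<times> Sset N)"
        unfolding I_def by (rule card_mono) (use fin in auto)
      also have "\<dots> = (M+1) * ((M+1) * M)" by (simp add: card_cartesian_product M_def[symmetric])
      also have "\<dots> \<le> (M+1) * ((M+1) * (M+1))" by (intro mult_le_mono2) simp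
      also have "\<dots> = (M+1)^3" by (simp add: power3_eq_cube)
      finally have cardI: "card I \<le> (M+1)^3" .
      have "\<exists>q\<in>I. \<eta> \<le> F q"
      proof (rule ccontr)
        assume "\<not> (\<exists>q\<in>I. \<eta> \<le> F q)"
        then have "\<forall>q\<in>I. F q \<le> \<eta>" by (auto simp: not_le intro: less_imp_le)
        then have "(\<Sum>q\<in>I. F q) \<le> real (card I) * \<eta>" by (intro sum_bounded_above) auto
        also have "\<dots> \<le> real ((M+1)^3) * \<eta>" using cardI eta_pos by (intro mult_right_mono) (simp only: of_nat_le_iff, simp)
        also have "\<dots> = 1/2" unfolding \<eta>_def by (simp add: add.commute)
        finally show False using sumF dsmall by simp
      qed
      then obtain q where qI: "q \<in> I" and Fq: "\<eta> \<le> F q" by blast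
      obtain i i' s where q: "q = (i, i', s)" and ii: "i < i'" "i' \<le> M" and sS: "s \<in> Sset N"
        using qI unfolding I_def by auto
      define x where "x = G N (i*g) s0 s"
      define z where "z = G N ((i'-i)*g) s s"
      have x0: "0 \<le> x" and z0: "0 \<le> z" unfolding x_def z_def by (simp_all add: G_nonneg)
      have x1: "x \<le> 1" unfolding x_def by (rule G_le1[OF fin s0S sS])
      have z1: "z \<le> 1" unfolding z_def by (rule G_le1[OF fin sS sS])
      have xz: "\<eta> \<le> x * z" using Fq q unfolding F_def x_def z_def by simp
      have "x * z \<le> x * 1" by (rule mult_left_mono[OF z1 x0])
      then have xe: "\<eta> \<le> x" using xz by simp
      have "x * z \<le> 1 * z" by (rule mult_right_mono[OF x1 z0])
      then have ze: "\<eta> \<le> z" using xz by simp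
      define L where "L = i*g + (4*M) * ((i'-i)*g)"
      have "\<eta> ^ (4*M+1) = \<eta> * \<eta> ^ (4*M)" by simp
      also have "\<dots> \<le> x * z ^ (4*M)"
        using xe ze eta_pos by (intro mult_mono power_mono) auto
      also have "\<dots> \<le> G N L s0 s" unfolding x_def z_def L_def by (rule G_pow[OF sS])
      also have "\<dots> \<le> (\<Sum>u\<in>Sset N. G N L s0 u)"
        by (rule member_le_sum) (use sS fin G_nonneg in auto)
      also have "\<dots> \<le> (\<Sum>u\<in>Sset N. G N (2*t) s0 u)"
      proof (rule r_mono[OF fin])
        have d1: "1 \<le> i' - i" using ii(1) by linarith
        have "1 * g \<le> (i'-i)*g" by (rule mult_le_mono1[OF d1])
        then have "g \<le> (i'-i)*g" by simp
        then have "4*M*g \<le> (4*M) * ((i'-i)*g)" by simp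
        then show "2*t \<le> L" unfolding L_def using t2 by linarith
      qed
      also have "\<dots> \<le> \<delta>" by (rule P2)
      finally have dlow: "\<eta> ^ (4*M+1) \<le> \<delta>" .
      define R where "R = 2 * (real M + 1) ^ 3"
      have Rpos: "0 < R" unfolding R_def by simp
      have "1 / \<delta> \<le> 1 / \<eta> ^ (4*M+1)"
        using dlow eta_pos d0 by (intro divide_left_mono) auto
      also have "\<dots> = R ^ (4*M+1)" unfolding \<eta>_def R_def by (simp add: power_one_over)
      finally have "ln (1/\<delta>) \<le> ln (R ^ (4*M+1))" using d0 Rpos by (subst ln_le_cancel_iff) auto
      also have "\<dots> = real (4*M+1) * ln R" by (rule ln_realpow)
      also have "\<dots> \<le> real (4*M+1) * real (3*n+4)"
      proof (rule mult_left_mono)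
        have "R \<le> real ((2::nat) ^ (3*n+4))"
        proof -
          have "R = real (2 * (2^n + 1) ^ 3)" unfolding R_def Mn by (simp add: add.commute)
          then show ?thesis using cube_bound[of n] by (simp only: of_nat_le_iff)
        qed
        then have "ln R \<le> ln (2 ^ (3*n+4))" using Rpos by (subst ln_le_cancel_iff) auto
        also have "\<dots> = real (3*n+4) * ln 2" by (rule ln_realpow)
        also have "\<dots> \<le> real (3*n+4) * 1" using ln_2_less_1 by (intro mult_left_mono) auto
        finally show "ln R \<le> real (3*n+4)" by simp
      qed simp
      also have "\<dots> = real ((4*2^n+1) * (3*n+4))" using Mn by (simp add: algebra_simps)
      also have "\<dots> \<le> real ((2::nat) ^ (2*n+6))" using nat_bound[of n] by (simp only: of_nat_le_iff)
      finally have "ln (1/\<delta>) \<le> 2 ^ (2*n+6)" by simp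
      then have "ln (ln (1/\<delta>)) \<le> ln (2 ^ (2*n+6))" using lnpos by (subst ln_le_cancel_iff) auto
      also have "\<dots> = real (2*n+6) * ln 2" by (rule ln_realpow)
      also have "\<dots> \<le> real (2*n+6) * 1" using ln_2_less_1 by (intro mult_left_mono) auto
      also have "\<dots> \<le> 5 * real n" using n2 by simp
      finally show ?thesis by (simp add: min_le_iff_disj n_def[symmetric])
    qed
  qed
qed

theorem theorem3:
  fixes W :: "nat \<Rightarrow> nat"
  assumes "\<exists>a d. \<forall>t. W t \<le> a * t ^ d + a"
    and "\<forall>t. 2 * t \<le> W t"
  shows "\<exists>c>0. \<forall>(t::nat) (\<delta>::real) N.
           0 < t \<longrightarrow> 0 < \<delta> \<longrightarrow> \<delta> < 1 \<longrightarrow> is_timer N t \<delta> (W t) \<longrightarrow>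
           real (card (neurons N)) \<ge> c * min (ln (ln (1 / \<delta>))) (ln (real t))"
proof (rule exI[of _ "1/5"], intro conjI allI impI)
  show "(0::real) < 1/5" by simp
  fix t :: nat and \<delta> :: real and N
  assume "0 < t" "0 < \<delta>" "\<delta> < 1" "is_timer N t \<delta> (W t)"
  then have "min (ln (ln (1 / \<delta>))) (ln (real t)) \<le> 5 * real (card (neurons N))"
    using main_bound assms(2) by blast
  then show "1/5 * min (ln (ln (1 / \<delta>))) (ln (real t)) \<le> real (card (neurons N))" by simp
qed


end
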